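(* Let $V$ be a finite-dimensional real vector space and $\mathcal{C} \subset V$ a proper cone. Then \[ \gamma(\mathcal{C}) = \sup_{K \text{ sole of } \mathcal{C}} \gamma_{\mathrm{aff}}(K). \]
   Context: A convex cone $\mathcal{C} \subset V$ is proper if it is closed, salient ($\mathcal{C} \cap (-\mathcal{C}) = \{0\}$) and generating ($\mathcal{C} - \mathcal{C} = V$). Its dual cone is $\mathcal{C}^* = \{f \in V^* : f(x) \geq 0 \text{ for all } x \in \mathcal{C}\}$. A sole of $\mathcal{C}$ is a set $\{x \in \mathcal{C} : f(x) = \alpha\}$ with $f \in \mathrm{int}(\mathcal{C}^* )$ and $\alpha > 0$; it is a convex body in the affine hyperplane $\{f = \alpha\}$. A linear map $\Psi : V \to V$ is $\mathcal{C}$-positive if $\Psi(\mathcal{C}) \subset \mathcal{C}$, strictly $\mathcal{C}$-positive if $\Psi(\mathcal{C}\setminus\{0\}) \subset \mathrm{int}(\mathcal{C})$, and $\mathcal{C}$-primitive if it is $\mathcal{C}$-positive and some power $\Psi^k$ ($k \geq 1$) is strictly $\mathcal{C}$-positive; the smallest such $k$ is $\gamma(\mathcal{C},\Psi)$, and the maximal exponent $\gamma(\mathcal{C})$ is the supremum of $\gamma(\mathcal{C},\Psi)$ over all $\mathcal{C}$-primitive $\Psi$. For a convex body $K$ (compact convex set with nonempty interior) in a finite-dimensional affine space $W$, an affine map $\Phi : W \to W$ is $K$-positive if $\Phi(K) \subset K$, strictly $K$-positive if $\Phi(K) \subset \mathrm{int}(K)$, $K$-primitive if it is $K$-positive and some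 $\Phi^k$ ($k\ge 1$) is strictly $K$-positive; the smallest such $k$ is $\gamma_{\mathrm{aff}}(K,\Phi)$, and $\gamma_{\mathrm{aff}}(K)$ is the supremum of $\gamma_{\mathrm{aff}}(K,\Phi)$ over all $K$-primitive affine maps $\Phi : W \to W$ (with $W$ the affine hyperplane containing the sole). *)

theory Defs
  imports "HOL-Analysis.Analysis" "HOL-Library.Extended_Nat"
begin

text \<open>V is modelled by a type 'a :: euclidean_space (a finite-dimensional real
  inner product space; every finite-dimensional real vector space is of this form).
  Linear functionals f on V are represented (Riesz) by vectors u, with f(x) = u \<bullet> x.\<close>

definition proper_cone :: "'a::euclidean_space set \<Rightarrow> bool" where
  "proper_cone C \<longleftrightarrow> convex C \<and> cone C \<and> closed C \<and> C \<inter> uminus ` C = {0}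
     \<and> {x - y | x y. x \<in> C \<and> y \<in> C} = UNIV"

definition dual_cone :: "'a::euclidean_space set \<Rightarrow> 'a set" where
  "dual_cone C = {u. \<forall>x\<in>C. u \<bullet> x \<ge> 0}"

definition soles :: "'a::euclidean_space set \<Rightarrow> 'a set set" where
  "soles C = {K. \<exists>u \<alpha>. u \<in> interior (dual_cone C) \<and> \<alpha> > 0 \<and> K = {x \<in> C. u \<bullet> x = \<alpha>}}"

definition cone_positive :: "'a::euclidean_space set \<Rightarrow> ('a \<Rightarrow> 'a) \<Rightarrow> bool" where
  "cone_positive C \<Psi> \<longleftrightarrow> \<Psi> ` C \<subseteq> C"

definition strictly_cone_positive :: "'a::euclidean_space set \<Rightarrow> ('a \<Rightarrow> 'a) \<Rightarrow> bool" where
  "strictly_cone_positive C \<Psi> \<longleftrightarrow> \<Psi> ` (C - {0}) \<subseteq> interior C"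

definition cone_primitive :: "'a::euclidean_space set \<Rightarrow> ('a \<Rightarrow> 'a) \<Rightarrow> bool" where
  "cone_primitive C \<Psi> \<longleftrightarrow> linear \<Psi> \<and> cone_positive C \<Psi>
     \<and> (\<exists>k\<ge>1. strictly_cone_positive C (\<Psi> ^^ k))"

definition gamma_map :: "'a::euclidean_space set \<Rightarrow> ('a \<Rightarrow> 'a) \<Rightarrow> nat" where
  "gamma_map C \<Psi> = (LEAST k. k \<ge> 1 \<and> strictly_cone_positive C (\<Psi> ^^ k))"

definition gamma_cone :: "'a::euclidean_space set \<Rightarrow> enat" where
  "gamma_cone C = (SUP \<Psi> \<in> {\<Psi>. cone_primitive C \<Psi>}. enat (gamma_map C \<Psi>))"

definition affine_self_map :: "'a::euclidean_space set \<Rightarrow> ('a \<Rightarrow> 'a) \<Rightarrow> bool" where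
  "affine_self_map W \<Phi> \<longleftrightarrow> \<Phi> ` W \<subseteq> W \<and>
     (\<exists>L b. linear L \<and> (\<forall>x\<in>W. \<Phi> x = L x + b))"

text \<open>For a convex body K in the affine space W = affine hull K, int(K) is the
  interior relative to W, i.e. rel_interior K.\<close>
definition body_positive :: "'a::euclidean_space set \<Rightarrow> ('a \<Rightarrow> 'a) \<Rightarrow> bool" where
  "body_positive K \<Phi> \<longleftrightarrow> \<Phi> ` K \<subseteq> K"

definition strictly_body_positive :: "'a::euclidean_space set \<Rightarrow> ('a \<Rightarrow> 'a) \<Rightarrow> bool" where
  "strictly_body_positive K \<Phi> \<longleftrightarrow> \<Phi> ` K \<subseteq> rel_interior K"

definition body_primitive :: "'a::euclidean_space set \<Rightarrow> ('a \<Rightarrow> 'a) \<Rightarrow> bool" where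
  "body_primitive K \<Phi> \<longleftrightarrow> affine_self_map (affine hull K) \<Phi> \<and> body_positive K \<Phi>
     \<and> (\<exists>k\<ge>1. strictly_body_positive K (\<Phi> ^^ k))"

definition gamma_aff_map :: "'a::euclidean_space set \<Rightarrow> ('a \<Rightarrow> 'a) \<Rightarrow> nat" where
  "gamma_aff_map K \<Phi> = (LEAST k. k \<ge> 1 \<and> strictly_body_positive K (\<Phi> ^^ k))"

definition gamma_aff :: "'a::euclidean_space set \<Rightarrow> enat" where
  "gamma_aff K = (SUP \<Phi> \<in> {\<Phi>. body_primitive K \<Phi>}. enat (gamma_aff_map K \<Phi>))"

end

theory Submission imports Defs begin

lemma linear_funpow: "linear (f::'a::real_vector \<Rightarrow> 'a) \<Longrightarrow> linear (f ^^ n)"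
proof (induction n)
  case 0 then show ?case by (simp add: linear_iff)
next
  case (Suc n) then show ?case using linear_compose[of "f ^^ n" f] by (simp add: o_def)
qed

lemma proper_coneD:
  fixes C :: "'a::euclidean_space set"
  assumes "proper_cone C"
  shows "convex C" "cone C" "closed C" "0 \<in> C" "interior C \<noteq> {}" "rel_interior C = interior C"
    "\<And>x. x \<in> C \<Longrightarrow> -x \<in> C \<Longrightarrow> x = 0"
proof -
  show c: "convex C" "cone C" "closed C" using assms by (auto simp: proper_cone_def)
  have "C \<inter> uminus ` C = {0}" using assms by (auto simp: proper_cone_def)
  then show z: "0 \<in> C" by auto
  show "\<And>x. x \<in> C \<Longrightarrow> -x \<in> C \<Longrightarrow> x = 0"
  proof -
    fix x assume "x \<in> C" "-x \<in> C"
    then have "x \<in> uminus ` C" by (metis image_eqI minus_minus)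
    with \<open>x \<in> C\<close> \<open>C \<inter> uminus ` C = {0}\<close> show "x = 0" by blast
  qed
  have U: "{x - y | x y. x \<in> C \<and> y \<in> C} = UNIV" using assms by (auto simp: proper_cone_def)
  have "span C = UNIV"
  proof -
    { fix v :: 'a
      have "v \<in> {x - y | x y. x \<in> C \<and> y \<in> C}" using U by simp
      then obtain x y where "v = x - y" "x \<in> C" "y \<in> C" by blast
      then have "v \<in> span C" by (simp add: span_base span_diff) }
    then show ?thesis by auto
  qed
  moreover have "affine hull C = span C" using z by (simp add: affine_hull_span_0 hull_inc)
  ultimately have "affine hull C = UNIV" by simp
  then show ri: "rel_interior C = interior C" by (rule rel_interior_interior)
  moreover have "rel_interior C \<noteq> {}" using c z rel_interior_eq_empty by blast
  ultimately show "interior C \<noteq> {}" by simp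
qed

lemma proper_cone_interior_nonzero:
  fixes C :: "'a::euclidean_space set"
  assumes "proper_cone C" "e \<in> interior C"
  shows "e \<noteq> 0"
proof
  assume "e = 0"
  obtain r where r: "r > 0" "ball e r \<subseteq> C" using assms(2) by (meson mem_interior)
  obtain b :: 'a where b: "b \<in> Basis" using nonempty_Basis by blast
  define x where "x = (r/2) *\<^sub>R b"
  have nx: "norm x = r/2" using b r by (simp add: x_def)
  have "x \<in> C" "-x \<in> C" using r nx \<open>e = 0\<close> by auto
  then have "x = 0" using proper_coneD(7)[OF assms(1)] by blast
  then show False using nx r by simp
qed

lemma interior_cone_scale:
  fixes C :: "'a::euclidean_space set"
  assumes "cone C" "y \<in> interior C" "t > 0"
  shows "t *\<^sub>R y \<in> interior C"
proof -
  obtain r where r: "r > 0" "ball y r \<subseteq> C" using assms(2) by (meson mem_interior)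
  have "ball (t *\<^sub>R y) (t * r) \<subseteq> C"
  proof
    fix z assume "z \<in> ball (t *\<^sub>R y) (t * r)"
    then have "dist (t *\<^sub>R y) z < t * r" by simp
    have "dist y ((1/t) *\<^sub>R z) = dist (t *\<^sub>R y) z / t"
    proof -
      have "y - (1/t) *\<^sub>R z = (1/t) *\<^sub>R (t *\<^sub>R y - z)" using assms(3) by (simp add: algebra_simps)
      then show ?thesis using assms(3) by (simp add: dist_norm)
    qed
    also have "\<dots> < r" using \<open>dist (t *\<^sub>R y) z < t * r\<close> assms(3) by (simp add: divide_less_eq mult.commute)
    finally have "(1/t) *\<^sub>R z \<in> C" using r by auto
    then have "t *\<^sub>R ((1/t) *\<^sub>R z) \<in> C" using assms(1,3) by (simp add: cone_def del: scaleR_scaleR)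
    then show "z \<in> C" using assms(3) by simp
  qed
  then show ?thesis using r assms(3) by (meson mem_interior mult_pos_pos)
qed

lemma dual_pos_interior:
  fixes C :: "'a::euclidean_space set"
  assumes "g \<in> dual_cone C" "g \<noteq> 0" "y \<in> interior C"
  shows "g \<bullet> y > 0"
proof -
  obtain r where r: "r > 0" "ball y r \<subseteq> C" using assms(3) by (meson mem_interior)
  define z where "z = y - (r/2 / norm g) *\<^sub>R g"
  have "dist y z < r" using r assms(2) by (simp add: z_def dist_norm)
  then have "z \<in> C" using r by auto
  then have "g \<bullet> z \<ge> 0" using assms(1) by (auto simp: dual_cone_def)
  moreover have "g \<bullet> z = g \<bullet> y - r/2 * norm g"
    using assms(2) by (simp add: z_def inner_diff_right power2_norm_eq_inner[symmetric] power2_eq_square)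
  moreover have "r/2 * norm g > 0" using r assms(2) by simp
  ultimately show ?thesis by linarith
qed

lemma interior_dual_pos:
  fixes C :: "'a::euclidean_space set"
  assumes "u \<in> interior (dual_cone C)" "x \<in> C" "x \<noteq> 0"
  shows "u \<bullet> x > 0"
proof -
  obtain r where r: "r > 0" "ball u r \<subseteq> dual_cone C" using assms(1) by (meson mem_interior)
  define v where "v = u - (r/2 / norm x) *\<^sub>R x"
  have "dist u v < r" using r assms(3) by (simp add: v_def dist_norm)
  then have "v \<in> dual_cone C" using r by auto
  then have "v \<bullet> x \<ge> 0" using assms(2) by (auto simp: dual_cone_def)
  moreover have "v \<bullet> x = u \<bullet> x - r/2 * norm x"
    using assms(3) by (simp add: v_def inner_diff_left power2_norm_eq_inner[symmetric] power2_eq_square)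
  moreover have "r/2 * norm x > 0" using r assms(3) by simp
  ultimately show ?thesis by linarith
qed

lemma pos_interior_dual:
  fixes C :: "'a::euclidean_space set"
  assumes "cone C" "closed C" "\<And>x. x \<in> C \<Longrightarrow> x \<noteq> 0 \<Longrightarrow> u \<bullet> x > 0"
  shows "u \<in> interior (dual_cone C)"
proof (cases "C \<inter> sphere 0 1 = {}")
  case True
  have "C \<subseteq> {0}"
  proof
    fix x assume "x \<in> C"
    show "x \<in> {0}"
    proof (rule ccontr)
      assume "x \<notin> {0}"
      then have "(1 / norm x) *\<^sub>R x \<in> C" using assms(1) \<open>x \<in> C\<close> by (simp add: cone_def)
      moreover have "(1 / norm x) *\<^sub>R x \<in> sphere 0 1" using \<open>x \<notin> {0}\<close> by simp
      ultimately show False using True by blast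
    qed
  qed
  then have "dual_cone C = UNIV" by (auto simp: dual_cone_def)
  then show ?thesis by simp
next
  case False
  have "compact (C \<inter> sphere 0 1)" using assms(2) by (simp add: compact_Int_closed closed_Int_compact)
  moreover have "continuous_on (C \<inter> sphere 0 1) (\<lambda>y. u \<bullet> y)" by (intro continuous_intros)
  ultimately obtain m where m: "m \<in> C \<inter> sphere 0 1" "\<forall>y \<in> C \<inter> sphere 0 1. u \<bullet> m \<le> u \<bullet> y"
    using False continuous_attains_inf[of "C \<inter> sphere 0 1" "\<lambda>y. u \<bullet> y"] by blast
  define \<mu> where "\<mu> = u \<bullet> m"
  have "m \<noteq> 0" using m by auto
  then have mu: "\<mu> > 0" using m assms(3) by (auto simp: \<mu>_def)
  have "ball u \<mu> \<subseteq> dual_cone C"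
  proof
    fix v assume v: "v \<in> ball u \<mu>"
    show "v \<in> dual_cone C"
      unfolding dual_cone_def
    proof (intro CollectI ballI)
      fix x assume "x \<in> C"
      show "v \<bullet> x \<ge> 0"
      proof (cases "x = 0")
        case True then show ?thesis by simp
      next
        case False
        have "(1 / norm x) *\<^sub>R x \<in> C \<inter> sphere 0 1" using assms(1) \<open>x \<in> C\<close> False by (simp add: cone_def)
        then have "\<mu> \<le> u \<bullet> ((1 / norm x) *\<^sub>R x)" using m(2) unfolding \<mu>_def by blast
        then have ux: "\<mu> * norm x \<le> u \<bullet> x" using False by (simp add: field_simps)
        have "\<bar>(v - u) \<bullet> x\<bar> \<le> norm (v - u) * norm x" by (rule Cauchy_Schwarz_ineq2)
        moreover have "norm (v - u) < \<mu>" using v by (simp add: dist_norm norm_minus_commute)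
        then have "norm (v - u) * norm x \<le> \<mu> * norm x" by (simp add: mult_right_mono)
        moreover have "v \<bullet> x = u \<bullet> x + (v - u) \<bullet> x" by (simp add: inner_diff_left)
        ultimately show ?thesis using ux by linarith
      qed
    qed
  qed
  then show ?thesis using mu by (meson mem_interior)
qed

lemma sole_rel_interior:
  fixes C :: "'a::euclidean_space set"
  assumes "proper_cone C" "u \<in> interior (dual_cone C)" "\<alpha> > 0"
  shows "rel_interior {x \<in> C. u \<bullet> x = \<alpha>} = interior C \<inter> {x. u \<bullet> x = \<alpha>}"
proof -
  have eq: "{x \<in> C. u \<bullet> x = \<alpha>} = C \<inter> {x. u \<bullet> x = \<alpha>}" by auto
  obtain e where e: "e \<in> interior C" using proper_coneD(5)[OF assms(1)] by blast
  have "e \<noteq> 0" using proper_cone_interior_nonzero[OF assms(1) e] .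
  then have ue: "u \<bullet> e > 0" using interior_dual_pos[OF assms(2)] e interior_subset by blast
  define e' where "e' = (\<alpha> / (u \<bullet> e)) *\<^sub>R e"
  have "e' \<in> interior C" unfolding e'_def
    using interior_cone_scale[OF proper_coneD(2)[OF assms(1)] e] ue assms(3) by simp
  moreover have "u \<bullet> e' = \<alpha>" using ue by (simp add: e'_def)
  moreover have H: "rel_interior {x. u \<bullet> x = \<alpha>} = {x. u \<bullet> x = \<alpha>}"
    by (rule rel_interior_affine[OF affine_hyperplane])
  ultimately have "e' \<in> rel_interior C \<inter> rel_interior {x. u \<bullet> x = \<alpha>}"
    using proper_coneD(6)[OF assms(1)] by simp
  then have ne: "rel_interior C \<inter> rel_interior {x. u \<bullet> x = \<alpha>} \<noteq> {}" by blast
  have cH: "convex {x. u \<bullet> x = \<alpha>}" by (simp add: affine_hyperplane affine_imp_convex)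
  show ?thesis unfolding eq
    using convex_rel_interior_inter_two[OF proper_coneD(1)[OF assms(1)] cH ne]
      proper_coneD(6)[OF assms(1)] H by simp
qed

lemma closed_dual_cone: "closed (dual_cone (C::'a::euclidean_space set))"
proof -
  have "dual_cone C = (\<Inter>x\<in>C. {g. x \<bullet> g \<ge> 0})" by (auto simp: dual_cone_def inner_commute)
  moreover have "closed (\<Inter>x\<in>C. {g. x \<bullet> g \<ge> 0})" by (intro closed_INT ballI closed_halfspace_ge)
  ultimately show ?thesis by simp
qed

lemma convex_dual_cone: "convex (dual_cone (C::'a::euclidean_space set))"
  unfolding convex_def dual_cone_def by (auto simp: inner_add_left)

lemma perron_dual:
  fixes C :: "'a::euclidean_space set"
  assumes P: "proper_cone C" and lin: "linear \<Psi>" and pos: "\<Psi> ` C \<subseteq> C"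
    and k: "k \<ge> 1" and sp: "strictly_cone_positive C (\<Psi> ^^ k)"
  shows "\<exists>f \<rho>. f \<in> interior (dual_cone C) \<and> \<rho> > 0 \<and> (\<forall>x. f \<bullet> \<Psi> x = \<rho> * (f \<bullet> x))"
proof -
  note cC = proper_coneD[OF P]
  define A where "A = adjoint \<Psi>"
  have Aw: "A g \<bullet> x = g \<bullet> \<Psi> x" for g x
    using adjoint_works[OF lin, of x g] by (simp add: A_def inner_commute)
  have linA: "linear A" unfolding A_def by (rule adjoint_linear[OF lin])
  obtain j where kj: "k = Suc j" using k by (cases k) auto
  have spk: "(\<Psi> ^^ k) x \<in> interior C" if "x \<in> C" "x \<noteq> 0" for x
    using sp that by (auto simp: strictly_cone_positive_def)
  obtain e where e: "e \<in> interior C" using cC(5) by blast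
  have e0: "e \<noteq> 0" using proper_cone_interior_nonzero[OF P e] .
  have eC: "e \<in> C" using e interior_subset by blast
  have "-e \<notin> C" using cC(7)[OF eC] e0 by auto
  then obtain a b where ab: "a \<bullet> (-e) < b" "\<forall>x\<in>C. b < a \<bullet> x"
    using separating_hyperplane_closed_point[OF cC(1) cC(3)] by blast
  have b0: "b < 0" using ab(2) cC(4) by force
  have aD: "a \<in> dual_cone C"
    unfolding dual_cone_def
  proof (intro CollectI ballI)
    fix x assume x: "x \<in> C"
    show "0 \<le> a \<bullet> x"
    proof (rule ccontr)
      assume "\<not> 0 \<le> a \<bullet> x"
      then have neg: "a \<bullet> x < 0" by simp
      define t where "t = (b - 1) / (a \<bullet> x)"
      have t: "t > 0" using neg b0 by (simp add: t_def divide_neg_neg)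
      have "t *\<^sub>R x \<in> C" using cC(2) x t by (simp add: cone_def)
      moreover have "a \<bullet> (t *\<^sub>R x) = b - 1" using neg by (simp add: t_def)
      ultimately show False using ab(2) by force
    qed
  qed
  have ae: "a \<bullet> e > 0" using ab(1) b0 by simp
  define S where "S = {g \<in> dual_cone C. g \<bullet> e = 1}"
  have g0S: "(1 / (a \<bullet> e)) *\<^sub>R a \<in> S"
    using aD ae unfolding S_def dual_cone_def by (auto intro: mult_nonneg_nonneg)
  obtain r where r: "r > 0" "ball e r \<subseteq> C" using e by (meson mem_interior)
  have Sb: "S \<subseteq> cball 0 (2/r)"
  proof
    fix g assume g: "g \<in> S"
    show "g \<in> cball 0 (2/r)"
    proof (cases "g = 0")
      case True then show ?thesis using r by simp
    next
      case False
      define z where "z = e - (r/2 / norm g) *\<^sub>R g"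
      have "dist e z < r" using r False by (simp add: z_def dist_norm)
      then have "z \<in> C" using r by auto
      then have "g \<bullet> z \<ge> 0" using g by (auto simp: S_def dual_cone_def)
      moreover have "g \<bullet> z = 1 - r/2 * norm g"
        using False g by (simp add: S_def z_def inner_diff_right power2_norm_eq_inner[symmetric] power2_eq_square)
      ultimately have "r/2 * norm g \<le> 1" by linarith
      then have "norm g \<le> 2/r" using r by (simp add: field_simps)
      then show ?thesis by simp
    qed
  qed
  have Scl: "closed S"
  proof -
    have "S = dual_cone C \<inter> {g. e \<bullet> g = 1}" by (auto simp: S_def inner_commute)
    then show ?thesis using closed_dual_cone closed_hyperplane by (metis closed_Int)
  qed
  have Scomp: "compact S" using Sb Scl bounded_cball bounded_subset compact_eq_bounded_closed by metis
  have Sconv: "convex S"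
  proof -
    have "S = dual_cone C \<inter> {g. e \<bullet> g = 1}" by (auto simp: S_def inner_commute)
    then show ?thesis using convex_dual_cone convex_hyperplane by (metis convex_Int)
  qed
  have AgD: "A g \<in> dual_cone C" if "g \<in> dual_cone C" for g
    using that pos by (auto simp: dual_cone_def Aw)
  have Agpos: "A g \<bullet> e > 0" if g: "g \<in> S" for g
  proof -
    have gD: "g \<in> dual_cone C" and g1: "g \<bullet> e = 1" using g by (auto simp: S_def)
    have gn: "g \<noteq> 0" using g1 by auto
    have "A g \<noteq> 0"
    proof
      assume "A g = 0"
      then have "g \<bullet> \<Psi> y = 0" for y using Aw[of g y] by simp
      then have "g \<bullet> (\<Psi> ^^ k) e = 0" using kj by simp
      moreover have "g \<bullet> (\<Psi> ^^ k) e > 0" using dual_pos_interior[OF gD gn spk[OF eC e0]] .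
      ultimately show False by simp
    qed
    then show ?thesis using dual_pos_interior[OF AgD[OF gD] _ e] by simp
  qed
  define T where "T g = (1 / (A g \<bullet> e)) *\<^sub>R A g" for g
  have contA: "continuous_on S A"
    using linA by (simp add: linear_continuous_on linear_conv_bounded_linear)
  have "continuous_on S T"
    unfolding T_def
    by (intro continuous_intros contA) (use Agpos in force)
  moreover have "T \<in> S \<rightarrow> S"
  proof
    fix g assume g: "g \<in> S"
    have "A g \<in> dual_cone C" using AgD g by (auto simp: S_def)
    then have "T g \<in> dual_cone C" using Agpos[OF g]
      by (auto simp: T_def dual_cone_def)
    moreover have "T g \<bullet> e = 1" using Agpos[OF g] by (simp add: T_def)
    ultimately show "T g \<in> S" by (simp add: S_def)
  qed
  ultimately obtain g where g: "g \<in> S" "T g = g"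
    using brouwer[OF Scomp Sconv] g0S by blast
  define \<rho> where "\<rho> = A g \<bullet> e"
  have rho: "\<rho> > 0" using Agpos[OF g(1)] by (simp add: \<rho>_def)
  have Ag: "A g = \<rho> *\<^sub>R g"
  proof -
    have "(1 / \<rho>) *\<^sub>R A g = g" using g(2) by (simp add: T_def \<rho>_def)
    then have "\<rho> *\<^sub>R ((1 / \<rho>) *\<^sub>R A g) = \<rho> *\<^sub>R g" by simp
    then show ?thesis using rho by simp
  qed
  have eig: "g \<bullet> \<Psi> x = \<rho> * (g \<bullet> x)" for x using Aw[of g x] Ag by simp
  have eign: "g \<bullet> (\<Psi> ^^ n) x = \<rho> ^ n * (g \<bullet> x)" for n x
    by (induction n) (simp_all add: eig)
  have gD: "g \<in> dual_cone C" and gn: "g \<noteq> 0" using g(1) by (auto simp: S_def)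
  have "g \<in> interior (dual_cone C)"
  proof (rule pos_interior_dual[OF cC(2) cC(3)])
    fix x assume x: "x \<in> C" "x \<noteq> 0"
    have "g \<bullet> (\<Psi> ^^ k) x > 0" using dual_pos_interior[OF gD gn spk[OF x]] .
    then have "\<rho> ^ k * (g \<bullet> x) > 0" by (simp add: eign)
    then show "g \<bullet> x > 0" using rho by (simp add: zero_less_mult_iff)
  qed
  then show ?thesis using rho eig by blast
qed

lemma cone_to_sole:
  fixes C :: "'a::euclidean_space set"
  assumes P: "proper_cone C" and prim: "cone_primitive C \<Psi>"
  shows "\<exists>K\<in>soles C. \<exists>\<Phi>. body_primitive K \<Phi> \<and> gamma_aff_map K \<Phi> = gamma_map C \<Psi>"
proof -
  note cC = proper_coneD[OF P]
  have lin: "linear \<Psi>" and pos: "\<Psi> ` C \<subseteq> C"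
    using prim by (auto simp: cone_primitive_def cone_positive_def)
  obtain k where k: "k \<ge> 1" "strictly_cone_positive C (\<Psi> ^^ k)"
    using prim by (auto simp: cone_primitive_def)
  obtain f \<rho> where f: "f \<in> interior (dual_cone C)" and rho: "\<rho> > 0"
    and eig: "\<And>x. f \<bullet> \<Psi> x = \<rho> * (f \<bullet> x)"
    using perron_dual[OF P lin pos k] by blast
  define K where "K = {x \<in> C. f \<bullet> x = 1}"
  have Ksole: "K \<in> soles C" unfolding soles_def K_def
    by (rule CollectI, rule exI[of _ f], rule exI[of _ 1]) (simp add: f)
  have riK: "rel_interior K = interior C \<inter> {x. f \<bullet> x = 1}"
    unfolding K_def by (rule sole_rel_interior[OF P f]) simp
  define \<Phi> where "\<Phi> x = (1 / \<rho>) *\<^sub>R \<Psi> x" for x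
  have linPhi: "linear \<Phi>"
    unfolding linear_iff \<Phi>_def using linear_add[OF lin] linear_scale[OF lin]
    by (simp add: algebra_simps)
  have linn: "linear (\<Psi> ^^ n)" for n by (rule linear_funpow[OF lin])
  have Phin: "(\<Phi> ^^ n) x = (1 / \<rho> ^ n) *\<^sub>R (\<Psi> ^^ n) x" for n x
    by (induction n) (simp_all add: \<Phi>_def linear_scale[OF lin])
  have eign: "f \<bullet> (\<Psi> ^^ n) x = \<rho> ^ n * (f \<bullet> x)" for n x
    by (induction n) (simp_all add: eig)
  have fPhin: "f \<bullet> (\<Phi> ^^ n) x = f \<bullet> x" for n x
    using rho by (simp add: Phin eign)
  have PhiK: "\<Phi> ` K \<subseteq> K"
  proof
    fix y assume "y \<in> \<Phi> ` K"
    then obtain x where x: "x \<in> K" "y = \<Phi> x" by blast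
    have "\<Psi> x \<in> C" using pos x by (auto simp: K_def)
    then have "y \<in> C" using cC(2) rho by (simp add: x(2) \<Phi>_def cone_def)
    moreover have "f \<bullet> y = 1" using x rho by (simp add: \<Phi>_def eig K_def)
    ultimately show "y \<in> K" by (simp add: K_def)
  qed
  have aff: "affine_self_map (affine hull K) \<Phi>"
    unfolding affine_self_map_def
  proof
    have "\<Phi> ` (affine hull K) = affine hull (\<Phi> ` K)"
      by (rule affine_hull_linear_image) (use linPhi linear_conv_bounded_linear in blast)
    also have "\<dots> \<subseteq> affine hull K" using PhiK by (rule hull_mono)
    finally show "\<Phi> ` (affine hull K) \<subseteq> affine hull K" .
    show "\<exists>L b. linear L \<and> (\<forall>x\<in>affine hull K. \<Phi> x = L x + b)"
      using linPhi by (intro exI[of _ \<Phi>] exI[of _ 0]) simp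
  qed
  have equiv: "strictly_body_positive K (\<Phi> ^^ n) \<longleftrightarrow> strictly_cone_positive C (\<Psi> ^^ n)" for n
  proof
    assume sb: "strictly_body_positive K (\<Phi> ^^ n)"
    show "strictly_cone_positive C (\<Psi> ^^ n)"
      unfolding strictly_cone_positive_def
    proof
      fix y assume "y \<in> (\<Psi> ^^ n) ` (C - {0})"
      then obtain x where x: "x \<in> C" "x \<noteq> 0" "y = (\<Psi> ^^ n) x" by blast
      define t where "t = f \<bullet> x"
      have t: "t > 0" using interior_dual_pos[OF f x(1,2)] by (simp add: t_def)
      define z where "z = (1 / t) *\<^sub>R x"
      have zK: "z \<in> K" using x t cC(2) by (simp add: z_def K_def cone_def t_def)
      have "(\<Phi> ^^ n) z \<in> interior C" using sb zK riK by (auto simp: strictly_body_positive_def)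
      moreover have "y = (t * \<rho> ^ n) *\<^sub>R (\<Phi> ^^ n) z"
      proof -
        have "x = t *\<^sub>R z" using t by (simp add: z_def)
        then have "y = t *\<^sub>R (\<Psi> ^^ n) z" using x(3) linear_scale[OF linn] by simp
        also have "(\<Psi> ^^ n) z = \<rho> ^ n *\<^sub>R (\<Phi> ^^ n) z" using rho by (simp add: Phin)
        finally show ?thesis by simp
      qed
      ultimately show "y \<in> interior C" using interior_cone_scale[OF cC(2)] t rho by simp
    qed
  next
    assume sc: "strictly_cone_positive C (\<Psi> ^^ n)"
    show "strictly_body_positive K (\<Phi> ^^ n)"
      unfolding strictly_body_positive_def
    proof
      fix y assume "y \<in> (\<Phi> ^^ n) ` K"
      then obtain z where z: "z \<in> K" "y = (\<Phi> ^^ n) z" by blast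
      have "z \<noteq> 0" "z \<in> C" using z by (auto simp: K_def)
      then have "(\<Psi> ^^ n) z \<in> interior C" using sc by (auto simp: strictly_cone_positive_def)
      then have "y \<in> interior C" using interior_cone_scale[OF cC(2)] rho by (simp add: z(2) Phin)
      moreover have "f \<bullet> y = 1" using z by (simp add: fPhin K_def)
      ultimately show "y \<in> rel_interior K" using riK by simp
    qed
  qed
  have "body_primitive K \<Phi>"
    unfolding body_primitive_def body_positive_def using aff PhiK k equiv by blast
  moreover have "gamma_aff_map K \<Phi> = gamma_map C \<Psi>"
    unfolding gamma_aff_map_def gamma_map_def using equiv by simp
  ultimately show ?thesis using Ksole by blast
qed

lemma sole_to_cone:
  fixes C :: "'a::euclidean_space set"
  assumes P: "proper_cone C" and Ks: "K \<in> soles C" and prim: "body_primitive K \<Phi>"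
  shows "\<exists>\<Psi>. cone_primitive C \<Psi> \<and> gamma_map C \<Psi> = gamma_aff_map K \<Phi>"
proof -
  note cC = proper_coneD[OF P]
  obtain u \<alpha> where u: "u \<in> interior (dual_cone C)" and al: "\<alpha> > 0" and K: "K = {x \<in> C. u \<bullet> x = \<alpha>}"
    using Ks by (auto simp: soles_def)
  have riK: "rel_interior K = interior C \<inter> {x. u \<bullet> x = \<alpha>}"
    unfolding K by (rule sole_rel_interior[OF P u al])
  obtain L b where L: "linear L" and Phi: "\<And>x. x \<in> affine hull K \<Longrightarrow> \<Phi> x = L x + b"
    using prim by (auto simp: body_primitive_def affine_self_map_def)
  have PhiK: "\<Phi> ` K \<subseteq> K" using prim by (auto simp: body_primitive_def body_positive_def)
  obtain k where k: "k \<ge> 1" "strictly_body_positive K (\<Phi> ^^ k)"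
    using prim by (auto simp: body_primitive_def)
  define \<Psi> where "\<Psi> x = L x + ((u \<bullet> x) / \<alpha>) *\<^sub>R b" for x
  have lin: "linear \<Psi>"
    unfolding linear_iff \<Psi>_def using linear_add[OF L] linear_scale[OF L]
    by (simp add: algebra_simps inner_add_right add_divide_distrib scaleR_add_left)
  have linn: "linear (\<Psi> ^^ n)" for n by (rule linear_funpow[OF lin])
  have PsiK: "\<Psi> z = \<Phi> z" if "z \<in> K" for z
    using that al Phi[of z] hull_inc[OF that] by (simp add: \<Psi>_def K)
  have PsinK: "(\<Psi> ^^ n) z = (\<Phi> ^^ n) z \<and> (\<Phi> ^^ n) z \<in> K" if "z \<in> K" for z n
  proof (induction n)
    case 0 then show ?case using that by simp
  next
    case (Suc n)
    then show ?case using PsiK[of "(\<Phi> ^^ n) z"] PhiK by auto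
  qed
  have decomp: "\<exists>t z. t > 0 \<and> z \<in> K \<and> x = t *\<^sub>R z" if x: "x \<in> C" "x \<noteq> 0" for x
  proof -
    define t where "t = (u \<bullet> x) / \<alpha>"
    have t: "t > 0" using interior_dual_pos[OF u x] al by (simp add: t_def)
    define z where "z = (1 / t) *\<^sub>R x"
    have "z \<in> C" using x(1) t cC(2) by (simp add: z_def cone_def)
    moreover have "u \<bullet> x > 0" using interior_dual_pos[OF u x] .
    then have "u \<bullet> z = \<alpha>" using al by (simp add: z_def t_def)
    ultimately have "z \<in> K" by (simp add: K)
    moreover have "x = t *\<^sub>R z" using t by (simp add: z_def)
    ultimately show ?thesis using t by blast
  qed
  have pos: "\<Psi> ` C \<subseteq> C"
  proof
    fix y assume "y \<in> \<Psi> ` C"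
    then obtain x where x: "x \<in> C" "y = \<Psi> x" by blast
    show "y \<in> C"
    proof (cases "x = 0")
      case True then show ?thesis using x cC(4) linear_0[OF lin] by simp
    next
      case False
      then obtain t z where tz: "t > 0" "z \<in> K" "x = t *\<^sub>R z" using decomp x(1) by blast
      have "\<Phi> z \<in> C" using PhiK tz(2) K by auto
      moreover have "y = t *\<^sub>R \<Phi> z" using x(2) tz linear_scale[OF lin] PsiK by simp
      ultimately show ?thesis using cC(2) tz(1) by (simp add: cone_def)
    qed
  qed
  have equiv: "strictly_body_positive K (\<Phi> ^^ n) \<longleftrightarrow> strictly_cone_positive C (\<Psi> ^^ n)" for n
  proof
    assume sb: "strictly_body_positive K (\<Phi> ^^ n)"
    show "strictly_cone_positive C (\<Psi> ^^ n)"
      unfolding strictly_cone_positive_def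
    proof
      fix y assume "y \<in> (\<Psi> ^^ n) ` (C - {0})"
      then obtain x where x: "x \<in> C" "x \<noteq> 0" "y = (\<Psi> ^^ n) x" by blast
      then obtain t z where tz: "t > 0" "z \<in> K" "x = t *\<^sub>R z" using decomp by blast
      have "(\<Phi> ^^ n) z \<in> interior C" using sb tz(2) riK by (auto simp: strictly_body_positive_def)
      moreover have "y = t *\<^sub>R (\<Phi> ^^ n) z"
        using x(3) tz linear_scale[OF linn] PsinK[OF tz(2)] by simp
      ultimately show "y \<in> interior C" using interior_cone_scale[OF cC(2)] tz(1) by simp
    qed
  next
    assume sc: "strictly_cone_positive C (\<Psi> ^^ n)"
    show "strictly_body_positive K (\<Phi> ^^ n)"
      unfolding strictly_body_positive_def
    proof
      fix y assume "y \<in> (\<Phi> ^^ n) ` K"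
      then obtain z where z: "z \<in> K" "y = (\<Phi> ^^ n) z" by blast
      have "z \<noteq> 0" "z \<in> C" using z al by (auto simp: K)
      then have "(\<Psi> ^^ n) z \<in> interior C" using sc by (auto simp: strictly_cone_positive_def)
      then have "y \<in> interior C" using PsinK[OF z(1)] z(2) by simp
      moreover have "u \<bullet> y = \<alpha>" using PsinK[OF z(1), of n] z(2) by (simp add: K)
      ultimately show "y \<in> rel_interior K" using riK by simp
    qed
  qed
  have "cone_primitive C \<Psi>"
    unfolding cone_primitive_def cone_positive_def using lin pos k equiv by blast
  moreover have "gamma_map C \<Psi> = gamma_aff_map K \<Phi>"
    unfolding gamma_aff_map_def gamma_map_def using equiv by simp
  ultimately show ?thesis by blast
qed

theorem proposition2:
  fixes C :: "'a::euclidean_space set"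
  assumes "proper_cone C"
  shows "gamma_cone C = (SUP K \<in> soles C. gamma_aff K)"
proof (rule antisym)
  show "gamma_cone C \<le> (SUP K \<in> soles C. gamma_aff K)"
    unfolding gamma_cone_def
  proof (rule SUP_least)
    fix \<Psi> assume "\<Psi> \<in> {\<Psi>. cone_primitive C \<Psi>}"
    then obtain K \<Phi> where K: "K \<in> soles C" "body_primitive K \<Phi>" "gamma_aff_map K \<Phi> = gamma_map C \<Psi>"
      using cone_to_sole[OF assms] by blast
    have "enat (gamma_map C \<Psi>) \<le> gamma_aff K"
      unfolding gamma_aff_def using K(2,3) by (metis SUP_upper mem_Collect_eq)
    also have "\<dots> \<le> (SUP K \<in> soles C. gamma_aff K)" using K(1) by (rule SUP_upper)
    finally show "enat (gamma_map C \<Psi>) \<le> (SUP K \<in> soles C. gamma_aff K)" .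
  qed
  show "(SUP K \<in> soles C. gamma_aff K) \<le> gamma_cone C"
  proof (rule SUP_least)
    fix K assume K: "K \<in> soles C"
    show "gamma_aff K \<le> gamma_cone C"
      unfolding gamma_aff_def
    proof (rule SUP_least)
      fix \<Phi> assume "\<Phi> \<in> {\<Phi>. body_primitive K \<Phi>}"
      then obtain \<Psi> where "cone_primitive C \<Psi>" "gamma_map C \<Psi> = gamma_aff_map K \<Phi>"
        using sole_to_cone[OF assms K] by blast
      then show "enat (gamma_aff_map K \<Phi>) \<le> gamma_cone C"
        unfolding gamma_cone_def by (metis SUP_upper mem_Collect_eq)
    qed
  qed
qed

end
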